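(* Let $\Omega$ be a Cantor group with identity $e$ and let $T$ be a minimal translation of $\Omega$. Then for every limit-periodic potential $d\in\ell^\infty(\mathbb{Z})$ with $\mathrm{hull}(d)\cong\Omega$ (as topological groups), there exists $f\in C(\Omega,\mathbb{R})$ such that $f(T^n(e))=d_n$ for every $n\in\mathbb{Z}$.
   Context: A Cantor group is a totally disconnected compact abelian topological group without isolated points. A translation of a topological group $\Omega$ is a map $T(\omega)=\omega\cdot\omega_0$ for some fixed $\omega_0\in\Omega$; it is minimal if $\{T^n(\omega):n\in\mathbb{Z}\}$ is dense in $\Omega$ for every $\omega$. $\sigma$ is the left shift on $\ell^\infty(\mathbb{Z})$ (sup norm), $(\sigma d)_n=d_{n+1}$, and $\mathrm{hull}(d)$ is the closure of $\{\sigma^k d:k\in\mathbb{Z}\}$. A potential is periodic if its shift orbit is finite, and limit-periodic if it lies in the $\ell^\infty$-closure of the periodic potentials. For limit-periodic $d$, $\mathrm{hull}(d)$ is compact and carries a unique topological group structure with identity $d$ such that $k\mapsto\sigma^k(d)$ is a homomorphism $\mathbb{Z}\to\mathrm{hull}(d)$. *)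

theory Defs
  imports "HOL-Analysis.Analysis"
begin

(* l^infty(Z) is modelled by the type  int \<Rightarrow>\<^sub>C real  of bounded (continuous) functions
   on the discrete space Z, with the sup norm. *)

definition shift_int :: "int \<Rightarrow> (int \<Rightarrow>\<^sub>C real) \<Rightarrow> (int \<Rightarrow>\<^sub>C real)" where
  "shift_int k d = Bcontfun (\<lambda>n. apply_bcontfun d (n + k))"

definition shift :: "(int \<Rightarrow>\<^sub>C real) \<Rightarrow> (int \<Rightarrow>\<^sub>C real)" where
  "shift d = shift_int 1 d"

definition shift_hull :: "(int \<Rightarrow>\<^sub>C real) \<Rightarrow> (int \<Rightarrow>\<^sub>C real) set" where
  "shift_hull d = closure (range (\<lambda>k. shift_int k d))"

definition periodic_pot :: "(int \<Rightarrow>\<^sub>C real) \<Rightarrow> bool" where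
  "periodic_pot d \<longleftrightarrow> finite (range (\<lambda>k. shift_int k d))"

definition limit_periodic :: "(int \<Rightarrow>\<^sub>C real) \<Rightarrow> bool" where
  "limit_periodic d \<longleftrightarrow> d \<in> closure {p. periodic_pot p}"

definition totally_disconnected :: "'a::topological_space set \<Rightarrow> bool" where
  "totally_disconnected S \<longleftrightarrow> (\<forall>C. C \<subseteq> S \<and> connected C \<longrightarrow> (\<forall>x\<in>C. \<forall>y\<in>C. x = y))"

definition cantor_group :: "'a::{topological_ab_group_add, t2_space} itself \<Rightarrow> bool" where
  "cantor_group _ \<longleftrightarrow> compact (UNIV :: 'a set) \<and> totally_disconnected (UNIV :: 'a set)
      \<and> (\<forall>x::'a. x islimpt UNIV)"

definition iter_int :: "('a \<Rightarrow> 'a) \<Rightarrow> int \<Rightarrow> 'a \<Rightarrow> 'a" where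
  "iter_int T n = (if n \<ge> 0 then T ^^ nat n else (inv T) ^^ nat (- n))"

definition translation :: "'a::group_add \<Rightarrow> 'a \<Rightarrow> 'a" where
  "translation \<omega>0 = (\<lambda>\<omega>. \<omega> + \<omega>0)"

definition minimal :: "('a::topological_space \<Rightarrow> 'a) \<Rightarrow> bool" where
  "minimal T \<longleftrightarrow> (\<forall>\<omega>. closure {iter_int T n \<omega> | n. True} = UNIV)"

definition topgroup_on :: "'b::topological_space set \<Rightarrow> ('b \<Rightarrow> 'b \<Rightarrow> 'b) \<Rightarrow> ('b \<Rightarrow> 'b) \<Rightarrow> 'b \<Rightarrow> bool" where
  "topgroup_on H gmul iv e \<longleftrightarrow>
     e \<in> H \<and>
     (\<forall>x\<in>H. \<forall>y\<in>H. gmul x y \<in> H) \<and> (\<forall>x\<in>H. iv x \<in> H) \<and>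
     (\<forall>x\<in>H. \<forall>y\<in>H. \<forall>z\<in>H. gmul (gmul x y) z = gmul x (gmul y z)) \<and>
     (\<forall>x\<in>H. gmul e x = x \<and> gmul x e = x) \<and>
     (\<forall>x\<in>H. gmul (iv x) x = e \<and> gmul x (iv x) = e) \<and>
     continuous_on (H \<times> H) (\<lambda>(x, y). gmul x y) \<and> continuous_on H iv"

(* The group structure on hull(d) used in the paper: a topological group structure with
   identity d for which k \<mapsto> sigma^k d is a homomorphism Z \<rightarrow> hull(d)
   (unique for limit-periodic d). *)
definition hull_group :: "(int \<Rightarrow>\<^sub>C real) \<Rightarrow> ((int \<Rightarrow>\<^sub>C real) \<Rightarrow> (int \<Rightarrow>\<^sub>C real) \<Rightarrow> (int \<Rightarrow>\<^sub>C real))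
      \<Rightarrow> ((int \<Rightarrow>\<^sub>C real) \<Rightarrow> (int \<Rightarrow>\<^sub>C real)) \<Rightarrow> bool" where
  "hull_group d gmul iv \<longleftrightarrow> topgroup_on (shift_hull d) gmul iv d \<and>
     (\<forall>j k. gmul (shift_int j d) (shift_int k d) = shift_int (j + k) d)"

definition hull_iso :: "(int \<Rightarrow>\<^sub>C real) \<Rightarrow> 'a::topological_ab_group_add itself \<Rightarrow> bool" where
  "hull_iso d _ \<longleftrightarrow> (\<exists>(\<phi>::'a \<Rightarrow> (int \<Rightarrow>\<^sub>C real)) gmul iv.
      hull_group d gmul iv \<and> homeomorphism UNIV (shift_hull d) \<phi> (inv \<phi>) \<and>
      (\<forall>x y. \<phi> (x + y) = gmul (\<phi> x) (\<phi> y)))"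

end

theory Submission
  imports Defs
begin

lemma shift_apply[simp]: "apply_bcontfun (shift_int k d) n = apply_bcontfun d (n + k)"
proof -
  have "(\<lambda>n. apply_bcontfun d (n + k)) \<in> bcontfun"
  proof -
    have "range (\<lambda>n. apply_bcontfun d (n + k)) \<subseteq> range (apply_bcontfun d)" by auto
    then have "bounded (range (\<lambda>n. apply_bcontfun d (n + k)))"
      using bounded_subset bounded_apply_bcontfun by blast
    then show ?thesis by (simp add: bcontfun_def)
  qed
  then show ?thesis by (simp add: shift_int_def Bcontfun_inverse)
qed

lemma shift_shift: "shift_int a (shift_int b d) = shift_int (a + b) d"
  by (rule bcontfun_eqI) (simp add: ac_simps)

lemma shift_0: "shift_int 0 d = d"
  by (rule bcontfun_eqI) simp

lemma dist_shift: "dist (shift_int k x) (shift_int k y) \<le> dist x y"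
  by (rule dist_bound) (simp add: dist_bounded)

lemma periodic_mult: "shift_int q p = p \<Longrightarrow> shift_int (q * k) p = p"
proof (induction k rule: int_induct[where k=0])
  case base then show ?case by (simp add: shift_0)
next
  case (step1 i)
  have "shift_int (q * (i+1)) p = shift_int q (shift_int (q*i) p)"
    by (simp add: shift_shift algebra_simps)
  then show ?case using step1 by simp
next
  case (step2 i)
  have "shift_int (q * (i - 1)) p = shift_int (q * (i - 1)) (shift_int q p)" using step2 by simp
  also have "\<dots> = shift_int (q*i) p" by (simp add: shift_shift algebra_simps)
  finally show ?case using step2 by simp
qed

lemma periodic_period:
  assumes "periodic_pot p" obtains q where "q > 0" "shift_int q p = p"
proof -
  have "\<not> inj (\<lambda>k. shift_int k p)"
  proof
    assume "inj (\<lambda>k. shift_int k p)"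
    then have "infinite (range (\<lambda>k::int. shift_int k p))"
      using finite_imageD infinite_UNIV_int by blast
    then show False using assms by (simp add: periodic_pot_def)
  qed
  then obtain i j :: int where ij: "i \<noteq> j" "shift_int i p = shift_int j p"
    unfolding inj_def by blast
  then have A: "\<And>a b. a \<noteq> b \<Longrightarrow> shift_int a p = shift_int b p \<Longrightarrow> shift_int (a - b) p = p"
  proof -
    fix a b assume "a \<noteq> b" "shift_int a p = shift_int b p"
    then have "shift_int (-b) (shift_int a p) = shift_int (-b) (shift_int b p)" by simp
    then show "shift_int (a - b) p = p" by (simp add: shift_shift shift_0)
  qed
  show ?thesis
  proof (cases "i > j")
    case True then show ?thesis using A[OF ij] that[of "i - j"] by simp
  next
    case False then have "j > i" using ij by simp
    then show ?thesis using A[of j i] ij that[of "j - i"] by simp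
  qed
qed

definition sg :: "'a::ab_group_add set \<Rightarrow> bool" where
  "sg U \<longleftrightarrow> 0 \<in> U \<and> (\<forall>x\<in>U. \<forall>y\<in>U. x - y \<in> U)"

lemma sg_add: "sg U \<Longrightarrow> x \<in> U \<Longrightarrow> y \<in> U \<Longrightarrow> x + y \<in> U"
  unfolding sg_def by (metis diff_0 diff_minus_eq_add)

lemma sg_diff: "sg U \<Longrightarrow> x \<in> U \<Longrightarrow> y \<in> U \<Longrightarrow> x - y \<in> U"
  unfolding sg_def by blast

definition ihom :: "(int \<Rightarrow> 'a::ab_group_add) \<Rightarrow> bool" where
  "ihom h \<longleftrightarrow> (\<forall>a b. h (a + b) = h a + h b)"

lemma ihom_0: "ihom h \<Longrightarrow> h 0 = 0"
  unfolding ihom_def by (metis add.right_neutral add_cancel_right_right)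

lemma ihom_diff: "ihom h \<Longrightarrow> h (a - b) = h a - h b"
  unfolding ihom_def by (metis diff_add_cancel eq_diff_eq)

lemma ihom_sub: "ihom g \<Longrightarrow> ihom h \<Longrightarrow> ihom (\<lambda>k. g k - h k)"
  unfolding ihom_def by (simp add: algebra_simps)

lemma ihom_comp_mult: "ihom h \<Longrightarrow> ihom (\<lambda>k. h (s * k))"
  unfolding ihom_def by (simp add: distrib_left)

lemma ihom_mult_mem:
  assumes "sg U" "ihom h" "h n \<in> U" shows "h (s * n) \<in> U"
proof (induction s rule: int_induct[where k=0])
  case base then show ?case using assms ihom_0[OF assms(2)] by (simp add: sg_def)
next
  case (step1 i)
  have "h ((i+1)*n) = h (i*n) + h n" using assms(2) unfolding ihom_def by (simp add: distrib_right)
  then show ?case using step1 assms sg_add by metis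
next
  case (step2 i)
  have "h ((i-1)*n) = h (i*n) - h n" using ihom_diff[OF assms(2), of "i*n" n] by (simp add: left_diff_distrib)
  then show ?case using step2 assms sg_diff by metis
qed

lemma translation_pow: "(translation c ^^ k) x = x + (translation c ^^ k) 0"
  by (induction k) (simp_all add: translation_def algebra_simps)

lemma inv_translation: "inv (translation (c::'a::group_add)) = translation (-c)"
  by (rule inv_equality) (simp_all add: translation_def algebra_simps)

lemma inv_pow_translation: "(translation (-c) ^^ k) (0::'a::ab_group_add) = - (translation c ^^ k) 0"
  by (induction k) (simp_all add: translation_def algebra_simps)

lemma iter_succ:
  fixes c :: "'a::ab_group_add"
  shows "iter_int (translation c) (n + 1) 0 = iter_int (translation c) n 0 + c"
proof (cases "n \<ge> 0")
  case True
  then have "nat (n+1) = Suc (nat n)" by simp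
  then show ?thesis using True by (simp add: iter_int_def translation_def)
next
  case False
  define k where "k = nat (-n) - 1"
  have k: "n = - int (Suc k)" using False unfolding k_def by simp
  have e: "(translation (- c) ^^ Suc k) 0 = (translation (- c) ^^ k) 0 - c"
    by (simp add: translation_def)
  show ?thesis
  proof (cases k)
    case 0 then show ?thesis using k
      unfolding iter_int_def inv_translation by (simp add: translation_def)
  next
    case (Suc m)
    then have "nat (-(n+1)) = k" "nat (-n) = Suc k" "\<not> n + 1 \<ge> 0" "\<not> n \<ge> 0" using k by auto
    then show ?thesis unfolding iter_int_def inv_translation using e by simp
  qed
qed

lemma iter_ihom: "ihom (\<lambda>n. iter_int (translation (c::'a::ab_group_add)) n 0)"
  unfolding ihom_def
proof (intro allI)
  fix a b :: int
  let ?A = "\<lambda>n. iter_int (translation c) n 0"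
  have z: "?A 0 = 0" by (simp add: iter_int_def)
  show "?A (a + b) = ?A a + ?A b"
  proof (induction b rule: int_induct[where k=0])
    case base then show ?case by (simp add: z)
  next
    case (step1 i) then show ?case using iter_succ[of c "a+i"] iter_succ[of c i]
      by (simp add: algebra_simps)
  next
    case (step2 i) then show ?case using iter_succ[of c "a+i-1"] iter_succ[of c "i - 1"]
      by (simp add: algebra_simps)
  qed
qed

lemma closed_vim: "closed U \<Longrightarrow> closed {x::'a::{topological_group_add,t2_space}. x - c \<in> U}"
proof -
  assume "closed U"
  moreover have "\<And>x. continuous (at x) (\<lambda>x::'a. x - c)" by (intro continuous_intros)
  ultimately have "closed ((\<lambda>x. x - c) -` U)" by (rule continuous_closed_vimage)
  then show ?thesis by (simp add: vimage_def)
qed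

lemma open_vim: "open U \<Longrightarrow> open {x::'a::{topological_group_add,t2_space}. x - c \<in> U}"
proof -
  assume "open U"
  moreover have "\<And>x. continuous (at x) (\<lambda>x::'a. x - c)" by (intro continuous_intros)
  ultimately have "open ((\<lambda>x. x - c) -` U)" by (rule continuous_open_vimage)
  then show ?thesis by (simp add: vimage_def)
qed

lemma core:
  fixes \<phi> :: "'a::{topological_ab_group_add,t2_space} \<Rightarrow> (int \<Rightarrow>\<^sub>C real)" and \<alpha> \<beta> :: "int \<Rightarrow> 'a"
  assumes ha: "ihom \<alpha>" and hb: "ihom \<beta>"
    and da: "closure (range \<alpha>) = UNIV" and db: "closure (range \<beta>) = UNIV"
    and pc: "continuous_on UNIV \<phi>"
    and pb: "\<And>j. \<phi> (\<beta> j) = shift_int j d"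
    and lp: "limit_periodic d" and e: "e > 0"
  shows "\<exists>U. open U \<and> 0 \<in> U \<and> (\<forall>n. \<alpha> n \<in> U \<longrightarrow> (\<forall>j. \<bar>apply_bcontfun d (j + n) - apply_bcontfun d j\<bar> \<le> e))"
proof -
  obtain p where pp: "periodic_pot p" and dp: "dist p d < e/2"
    using lp e unfolding limit_periodic_def closure_approachable by (metis half_gt_zero mem_Collect_eq)
  obtain q where q: "q > 0" "shift_int q p = p" using periodic_period[OF pp] by blast
  define A where "A = range (\<lambda>k. \<beta> (q * k))"
  define U where "U = closure A"
  have Adiff: "x - y \<in> A" if xy: "x \<in> A" "y \<in> A" for x y
  proof -
    obtain k l where "x = \<beta> (q*k)" "y = \<beta> (q*l)" using xy unfolding A_def by auto
    then have "x - y = \<beta> (q * (k - l))" using ihom_diff[OF hb] by (simp add: right_diff_distrib)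
    then show ?thesis unfolding A_def by auto
  qed
  have "\<beta> (q * 0) \<in> A" unfolding A_def by blast
  then have "0 \<in> A" using ihom_0[OF hb] by simp
  then have U0: "0 \<in> U" unfolding U_def using closure_subset by blast
  have "(\<lambda>z. fst z - snd z) ` closure (A \<times> A) \<subseteq> closure A"
    by (rule image_closure_subset) (auto intro!: continuous_intros simp: Adiff closure_subset[THEN subsetD])
  then have "x - y \<in> U" if "x \<in> U" "y \<in> U" for x y
    using that unfolding U_def closure_Times by force
  then have sgU: "sg U" using U0 unfolding sg_def by blast
  have clU: "closed U" unfolding U_def by simp
  define V where "V = (\<lambda>c. {x. x - c \<in> U})"
  have clV: "closed (V c)" for c unfolding V_def using closed_vim[OF clU] .
  have "range \<beta> \<subseteq> (\<Union>r\<in>{0..<q}. V (\<beta> r))"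
  proof
    fix x assume "x \<in> range \<beta>"
    then obtain j where x: "x = \<beta> j" by auto
    have "\<beta> j - \<beta> (j mod q) = \<beta> (j - j mod q)"
      using ihom_diff[OF hb, of j "j mod q"] by simp
    also have "j - j mod q = q * (j div q)" by (rule minus_mod_eq_mult_div)
    finally have "\<beta> j - \<beta> (j mod q) \<in> A" unfolding A_def by blast
    then have "\<beta> j - \<beta> (j mod q) \<in> U" unfolding U_def using closure_subset by blast
    moreover have "j mod q \<in> {0..<q}" using q by simp
    ultimately show "x \<in> (\<Union>r\<in>{0..<q}. V (\<beta> r))" unfolding V_def x by blast
  qed
  moreover have "closed (\<Union>r\<in>{0..<q}. V (\<beta> r))" using clV by (intro closed_UN) auto
  ultimately have cover: "UNIV \<subseteq> (\<Union>r\<in>{0..<q}. V (\<beta> r))"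
    using closure_minimal db by metis
  define W where "W = (\<Union>r\<in>{r\<in>{0..<q}. \<beta> r \<notin> U}. V (\<beta> r))"
  have "closed W" unfolding W_def using clV by (intro closed_UN) (auto intro: finite_subset[of _ "{0..<q}"])
  moreover have "- U = W"
  proof
    show "- U \<subseteq> W"
    proof
      fix x assume x: "x \<in> - U"
      then obtain r where r: "r \<in> {0..<q}" "x - \<beta> r \<in> U" using cover unfolding V_def by blast
      have "\<beta> r \<notin> U"
      proof
        assume "\<beta> r \<in> U"
        then have "(x - \<beta> r) + \<beta> r \<in> U" using sg_add[OF sgU r(2)] by blast
        then show False using x by simp
      qed
      then show "x \<in> W" unfolding W_def V_def using r by blast
    qed
  next
    show "W \<subseteq> - U"
    proof
      fix x assume "x \<in> W"
      then obtain r where r: "\<beta> r \<notin> U" "x - \<beta> r \<in> U" unfolding W_def V_def by blast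
      show "x \<in> - U"
      proof
        assume "x \<in> U"
        then have "x - (x - \<beta> r) \<in> U" using sg_diff[OF sgU _ r(2)] by blast
        then show False using r by simp
      qed
    qed
  qed
  ultimately have oU: "open U" by (metis open_Compl double_complement)
  have oV: "open {x. x - \<beta> 1 \<in> U}" using open_vim[OF oU] .
  have "\<beta> 1 \<in> {x. x - \<beta> 1 \<in> U}" using U0 by simp
  then have "{x. x - \<beta> 1 \<in> U} \<inter> closure (range \<alpha>) \<noteq> {}" unfolding da by blast
  then have "{x. x - \<beta> 1 \<in> U} \<inter> range \<alpha> \<noteq> {}" using open_Int_closure_eq_empty[OF oV] by blast
  then obtain s where s: "\<alpha> s - \<beta> 1 \<in> U" by auto
  have bnd: "\<forall>j. \<bar>apply_bcontfun d (j + n) - apply_bcontfun d j\<bar> \<le> e" if an: "\<alpha> n \<in> U" for n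
  proof -
    have a1: "\<alpha> (s * n) \<in> U" using ihom_mult_mem[OF sgU ha an] .
    define \<gamma> where "\<gamma> = (\<lambda>k. \<alpha> (s * k) - \<beta> k)"
    have hg: "ihom \<gamma>" unfolding \<gamma>_def by (intro ihom_sub ihom_comp_mult ha hb)
    have "\<gamma> 1 \<in> U" using s unfolding \<gamma>_def by simp
    then have "\<gamma> (n * 1) \<in> U" using ihom_mult_mem[OF sgU hg] by blast
    then have "\<alpha> (s * n) - \<gamma> n \<in> U" using sg_diff[OF sgU a1] by simp
    then have bn: "\<beta> n \<in> U" unfolding \<gamma>_def by simp
    have "\<phi> ` closure A \<subseteq> cball d e"
    proof (rule image_closure_subset)
      show "continuous_on (closure A) \<phi>" using pc continuous_on_subset by blast
      show "closed (cball d e)" by simp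
      show "\<phi> ` A \<subseteq> cball d e"
      proof
        fix y assume "y \<in> \<phi> ` A"
        then obtain k where y: "y = shift_int (q * k) d" unfolding A_def using pb by auto
        have "dist (shift_int (q*k) d) d \<le> dist (shift_int (q*k) d) (shift_int (q*k) p) + dist (shift_int (q*k) p) d"
          by (rule dist_triangle)
        also have "\<dots> \<le> dist d p + dist p d" using dist_shift[of "q*k" d p] periodic_mult[OF q(2), of k] by simp
        also have "\<dots> < e" using dp by (simp add: dist_commute)
        finally show "y \<in> cball d e" using y by (simp add: dist_commute)
      qed
    qed
    then have "shift_int n d \<in> cball d e" using bn pb unfolding U_def by force
    then have "dist (shift_int n d) d \<le> e" by (simp add: dist_commute)
    then have "dist (apply_bcontfun (shift_int n d) j) (apply_bcontfun d j) \<le> e" for j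
      using dist_bounded order_trans by blast
    then show ?thesis by (simp add: dist_real_def)
  qed
  show ?thesis using oU U0 bnd by blast
qed

theorem theorem4p5:
  fixes \<omega>0 :: "'a::{topological_ab_group_add, t2_space}"
    and d :: "int \<Rightarrow>\<^sub>C real"
  assumes "cantor_group TYPE('a)"
    and "minimal (translation \<omega>0)"
    and "limit_periodic d"
    and "hull_iso d TYPE('a)"
  shows "\<exists>f :: 'a \<Rightarrow> real. continuous_on UNIV f \<and>
           (\<forall>n::int. f (iter_int (translation \<omega>0) n 0) = apply_bcontfun d n)"
proof -
  note cg = assms(1) and mi = assms(2) and lp = assms(3)
  obtain \<phi> :: "'a \<Rightarrow> (int \<Rightarrow>\<^sub>C real)" and gmul iv where
    hg: "hull_group d gmul iv" and hm: "homeomorphism UNIV (shift_hull d) \<phi> (inv \<phi>)"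
    and ph: "\<And>x y. \<phi> (x + y) = gmul (\<phi> x) (\<phi> y)"
    using assms(4) unfolding hull_iso_def by blast
  define H where "H = shift_hull d"
  define \<psi> where "\<psi> = inv \<phi>"
  have psiphi: "\<And>x. \<psi> (\<phi> x) = x" and imH: "\<phi> ` UNIV = H" and pc: "continuous_on UNIV \<phi>"
    and phipsi: "\<And>y. y \<in> H \<Longrightarrow> \<phi> (\<psi> y) = y" and imU: "\<psi> ` H = UNIV" and qc: "continuous_on H \<psi>"
    using hm unfolding homeomorphism_def H_def \<psi>_def by auto
  have gm: "\<And>j k. gmul (shift_int j d) (shift_int k d) = shift_int (j + k) d"
    using hg unfolding hull_group_def by blast
  have cpt: "compact (UNIV :: 'a set)" using cg unfolding cantor_group_def by blast
  have cH: "compact H" using compact_continuous_image[OF pc cpt] imH by simp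
  define \<alpha> where "\<alpha> = (\<lambda>n. iter_int (translation \<omega>0) n 0)"
  have ha: "ihom \<alpha>" unfolding \<alpha>_def by (rule iter_ihom)
  have eqa: "{iter_int (translation \<omega>0) n 0 | n. True} = range \<alpha>" unfolding \<alpha>_def by blast
  have "closure {iter_int (translation \<omega>0) n 0 | n. True} = UNIV"
    using mi unfolding minimal_def by (rule spec)
  then have da: "closure (range \<alpha>) = UNIV" unfolding eqa .
  define \<beta> where "\<beta> = (\<lambda>j. \<psi> (shift_int j d))"
  have sH: "shift_int j d \<in> H" for j unfolding H_def shift_hull_def by (rule closure_subset[THEN subsetD]) (rule rangeI)
  have pb: "\<phi> (\<beta> j) = shift_int j d" for j unfolding \<beta>_def using phipsi[OF sH] .
  have hb: "ihom \<beta>" unfolding ihom_def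
  proof (intro allI)
    fix a b
    have "\<phi> (\<beta> a + \<beta> b) = gmul (\<phi> (\<beta> a)) (\<phi> (\<beta> b))" by (rule ph)
    also have "\<dots> = shift_int (a + b) d" unfolding pb by (rule gm)
    finally have "\<phi> (\<beta> a + \<beta> b) = shift_int (a + b) d" .
    then have "\<psi> (\<phi> (\<beta> a + \<beta> b)) = \<beta> (a + b)" unfolding \<beta>_def by simp
    then show "\<beta> (a + b) = \<beta> a + \<beta> b" using psiphi by simp
  qed
  have "\<psi> ` closure (range (\<lambda>k. shift_int k d)) \<subseteq> closure (range \<beta>)"
  proof (rule image_closure_subset)
    show "continuous_on (closure (range (\<lambda>k. shift_int k d))) \<psi>" using qc unfolding H_def shift_hull_def .
    show "closed (closure (range \<beta>))" by (rule closed_closure)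
    have "\<psi> ` range (\<lambda>k. shift_int k d) = range \<beta>" unfolding \<beta>_def by (simp add: image_image)
    then show "\<psi> ` range (\<lambda>k. shift_int k d) \<subseteq> closure (range \<beta>)" using closure_subset[of "range \<beta>"] by simp
  qed
  moreover have "\<psi> ` closure (range (\<lambda>k. shift_int k d)) = UNIV" using imU unfolding H_def shift_hull_def .
  ultimately have db: "closure (range \<beta>) = UNIV" by (metis top.extremum_uniqueI)
  have corel: "\<exists>U. open U \<and> 0 \<in> U \<and> (\<forall>n. \<alpha> n \<in> U \<longrightarrow> (\<forall>j. \<bar>apply_bcontfun d (j + n) - apply_bcontfun d j\<bar> \<le> e))"
    if "e > 0" for e
    using core[OF ha hb da db pc pb lp that] .
  have wd: "apply_bcontfun d n = apply_bcontfun d m" if "\<alpha> n = \<alpha> m" for n m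
  proof (rule ccontr)
    assume ne: "apply_bcontfun d n \<noteq> apply_bcontfun d m"
    define e where "e = \<bar>apply_bcontfun d n - apply_bcontfun d m\<bar> / 2"
    have e: "e > 0" using ne unfolding e_def by simp
    obtain U where U: "0 \<in> U" "\<forall>k. \<alpha> k \<in> U \<longrightarrow> (\<forall>j. \<bar>apply_bcontfun d (j + k) - apply_bcontfun d j\<bar> \<le> e)"
      using corel[OF e] by blast
    have "\<alpha> (n - m) = 0" using ihom_diff[OF ha] that by simp
    then have "\<bar>apply_bcontfun d (m + (n - m)) - apply_bcontfun d m\<bar> \<le> e" using U by metis
    then show False using e unfolding e_def by simp
  qed
  define S where "S = range (\<lambda>n. \<phi> (\<alpha> n))"
  define g where "g = (\<lambda>y. apply_bcontfun d (SOME n. y = \<phi> (\<alpha> n)))"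
  have gphi: "g (\<phi> (\<alpha> n)) = apply_bcontfun d n" for n
  proof -
    have "\<phi> (\<alpha> n) = \<phi> (\<alpha> (SOME k. \<phi> (\<alpha> n) = \<phi> (\<alpha> k)))" by (rule someI) (rule refl)
    then have "\<alpha> n = \<alpha> (SOME k. \<phi> (\<alpha> n) = \<phi> (\<alpha> k))" using psiphi by metis
    then show ?thesis unfolding g_def using wd by metis
  qed
  define Hm where "Hm = (\<lambda>z. \<phi> (\<psi> (fst z) - \<psi> (snd z)))"
  have cHm: "continuous_on (H \<times> H) Hm" unfolding Hm_def
  proof (rule continuous_on_compose2[OF pc _ subset_UNIV])
    show "continuous_on (H \<times> H) (\<lambda>z. \<psi> (fst z) - \<psi> (snd z))"
      by (intro continuous_intros continuous_on_compose2[OF qc]) auto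
  qed
  have ucHm: "uniformly_continuous_on (H \<times> H) Hm"
    by (rule compact_uniformly_continuous[OF cHm compact_Times[OF cH cH]])
  have ucg: "uniformly_continuous_on S g"
    unfolding uniformly_continuous_on_def
  proof (intro allI impI)
    fix e :: real assume e: "e > 0"
    obtain U where U: "open U" "0 \<in> U" "\<forall>k. \<alpha> k \<in> U \<longrightarrow> (\<forall>j. \<bar>apply_bcontfun d (j + k) - apply_bcontfun d j\<bar> \<le> e/2)"
      using corel[of "e/2"] e by auto
    obtain A where A: "open A" "A \<inter> H = \<psi> -` U \<inter> H"
      using qc U(1) unfolding continuous_on_open_invariant by blast
    have p0: "\<phi> 0 \<in> H" using imH by blast
    then have "\<phi> 0 \<in> A" using A U(2) psiphi by blast
    then obtain r where r: "r > 0" "ball (\<phi> 0) r \<subseteq> A" using A(1) open_contains_ball by blast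
    obtain \<delta> where \<delta>: "\<delta> > 0" "\<forall>x\<in>H \<times> H. \<forall>x'\<in>H \<times> H. dist x' x < \<delta> \<longrightarrow> dist (Hm x') (Hm x) < r"
      using ucHm r(1) unfolding uniformly_continuous_on_def by blast
    show "\<exists>\<delta>>0. \<forall>x\<in>S. \<forall>x'\<in>S. dist x' x < \<delta> \<longrightarrow> dist (g x') (g x) < e"
    proof (intro exI[of _ \<delta>] conjI ballI impI)
      show "\<delta> > 0" by fact
      fix x x' assume x: "x \<in> S" and x': "x' \<in> S" and dx: "dist x' x < \<delta>"
      obtain m where m: "x = \<phi> (\<alpha> m)" using x unfolding S_def by blast
      obtain n where n: "x' = \<phi> (\<alpha> n)" using x' unfolding S_def by blast
      have xH: "x \<in> H" "x' \<in> H" using m n imH by auto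
      have "dist (x', x) (x, x) < \<delta>" using dx by (simp add: dist_Pair_Pair)
      then have "dist (Hm (x', x)) (Hm (x, x)) < r" using \<delta>(2) xH by blast
      moreover have "Hm (x, x) = \<phi> 0" unfolding Hm_def by simp
      moreover have hx: "Hm (x', x) = \<phi> (\<alpha> (n - m))" unfolding Hm_def m n using psiphi ihom_diff[OF ha] by simp
      ultimately have "\<phi> (\<alpha> (n - m)) \<in> A" using r(2) by (auto simp: dist_commute)
      moreover have "\<phi> (\<alpha> (n - m)) \<in> H" using imH by blast
      ultimately have "\<psi> (\<phi> (\<alpha> (n - m))) \<in> U" using A(2) by blast
      then have "\<alpha> (n - m) \<in> U" using psiphi by simp
      then have "\<bar>apply_bcontfun d (m + (n - m)) - apply_bcontfun d m\<bar> \<le> e/2" using U(3) by blast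
      then show "dist (g x') (g x) < e" using e by (simp add: m n gphi dist_real_def)
    qed
  qed
  obtain G where G: "uniformly_continuous_on (closure S) G" "\<And>x. x \<in> S \<Longrightarrow> g x = G x"
    using uniformly_continuous_on_extension_on_closure[OF ucg] by metis
  have "\<phi> ` closure (range \<alpha>) \<subseteq> closure (\<phi> ` range \<alpha>)"
  proof (rule image_closure_subset)
    show "continuous_on (closure (range \<alpha>)) \<phi>" using continuous_on_subset[OF pc] by simp
    show "closed (closure (\<phi> ` range \<alpha>))" by (rule closed_closure)
    show "\<phi> ` range \<alpha> \<subseteq> closure (\<phi> ` range \<alpha>)" by (rule closure_subset)
  qed
  then have sub: "\<phi> ` UNIV \<subseteq> closure S" using da unfolding S_def by (simp add: image_image)
  show ?thesis
  proof (intro exI[of _ "\<lambda>x. G (\<phi> x)"] conjI allI)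
    show "continuous_on UNIV (\<lambda>x. G (\<phi> x))"
      by (rule continuous_on_compose2[OF uniformly_continuous_imp_continuous[OF G(1)] pc sub])
    fix n
    have "\<phi> (\<alpha> n) \<in> S" unfolding S_def by blast
    then show "G (\<phi> (iter_int (translation \<omega>0) n 0)) = apply_bcontfun d n"
      using G(2) gphi unfolding \<alpha>_def by metis
  qed
qed

end
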